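(* Let $k$ be an algebraically closed field, let $A$ be a local Noetherian $k$-algebra with residue field $k$, and let $M$ be a finitely generated $A$-module. Then $M$ is free if and only if for every integer $n > 0$ and every ideal $I_n \subset A$ of colength $n$, $$\frac{\dim_k (M \otimes_A A/I_n)}{n} = \dim_k (M \otimes_A k).$$
   Context: An ideal $I \subset A$ is said to be of colength $n$ if $A/I$ is an Artinian $k$-algebra with $\dim_k A/I = n$. *)

theory Defs
  imports Complex_Main "HOL-Computational_Algebra.Polynomial"
begin

definition alg_closed :: "'k::field itself \<Rightarrow> bool" where
  "alg_closed _ = (\<forall>p::'k poly. degree p > 0 \<longrightarrow> (\<exists>x. poly p x = 0))"

definition is_ideal :: "'a::comm_ring_1 set \<Rightarrow> bool" where
  "is_ideal I = module.subspace ((*) :: 'a \<Rightarrow> 'a \<Rightarrow> 'a) I"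

definition maximal_ideal :: "'a::comm_ring_1 set \<Rightarrow> bool" where
  "maximal_ideal m = (is_ideal m \<and> m \<noteq> UNIV \<and>
     (\<forall>J. is_ideal J \<and> m \<subseteq> J \<longrightarrow> J = m \<or> J = UNIV))"

definition local_ring :: "'a::comm_ring_1 itself \<Rightarrow> bool" where
  "local_ring _ = (\<exists>!m::'a set. maximal_ideal m)"

definition noetherian_ring :: "'a::comm_ring_1 itself \<Rightarrow> bool" where
  "noetherian_ring _ = (\<forall>I::'a set. is_ideal I \<longrightarrow>
     (\<exists>F. finite F \<and> I = module.span ((*) :: 'a \<Rightarrow> 'a \<Rightarrow> 'a) F))"

definition ring_hom :: "('k::field \<Rightarrow> 'a::comm_ring_1) \<Rightarrow> bool" where
  "ring_hom \<phi> = ((\<forall>x y. \<phi> (x + y) = \<phi> x + \<phi> y) \<and> (\<forall>x y. \<phi> (x * y) = \<phi> x * \<phi> y) \<and> \<phi> 1 = 1)"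

(* A/I is Artinian: DCC on ideals of A/I, i.e. on ideals of A containing I *)
definition artinian_quotient :: "'a::comm_ring_1 set \<Rightarrow> bool" where
  "artinian_quotient I = (\<forall>J :: nat \<Rightarrow> 'a set.
     (\<forall>i. is_ideal (J i) \<and> I \<subseteq> J i \<and> J (Suc i) \<subseteq> J i) \<longrightarrow> (\<exists>N. \<forall>i\<ge>N. J i = J N))"

(* Dimension over the field 'k of the quotient V/N, where s is the scalar
   multiplication of 'k on V: cardinality of a set B of representatives of a basis of V/N. *)
definition indep_mod :: "('k::field \<Rightarrow> 'v::ab_group_add \<Rightarrow> 'v) \<Rightarrow> 'v set \<Rightarrow> 'v set \<Rightarrow> bool" where
  "indep_mod s N B = (\<forall>F u. finite F \<and> F \<subseteq> B \<and> (\<Sum>b\<in>F. s (u b) b) \<in> module.span s N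
      \<longrightarrow> (\<forall>b\<in>F. u b = 0))"

definition quot_dim :: "('k::field \<Rightarrow> 'v::ab_group_add \<Rightarrow> 'v) \<Rightarrow> 'v set \<Rightarrow> nat" where
  "quot_dim s N = card (SOME B. indep_mod s N B \<and> module.span s (B \<union> N) = UNIV)"

definition ideal_times :: "('a::comm_ring_1 \<Rightarrow> 'm::ab_group_add \<Rightarrow> 'm) \<Rightarrow> 'a set \<Rightarrow> 'm set" where
  "ideal_times scale I = module.span scale {scale a x | a x. a \<in> I}"

(* dim_k (M \<otimes>_A A/I), computed via the canonical isomorphism M \<otimes>_A A/I \<cong> M/IM *)
definition tensor_quot_dim :: "('k::field \<Rightarrow> 'a::comm_ring_1) \<Rightarrow> ('a \<Rightarrow> 'm::ab_group_add \<Rightarrow> 'm) \<Rightarrow> 'a set \<Rightarrow> nat" where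
  "tensor_quot_dim \<phi> scale I = quot_dim (\<lambda>c x. scale (\<phi> c) x) (ideal_times scale I)"

definition colength :: "('k::field \<Rightarrow> 'a::comm_ring_1) \<Rightarrow> 'a set \<Rightarrow> nat \<Rightarrow> bool" where
  "colength \<phi> I n = (is_ideal I \<and> artinian_quotient I \<and> quot_dim (\<lambda>c a. \<phi> c * a) I = n)"

definition free_module :: "('a::comm_ring_1 \<Rightarrow> 'm::ab_group_add \<Rightarrow> 'm) \<Rightarrow> bool" where
  "free_module scale = (\<exists>B. \<not> module.dependent scale B \<and> module.span scale B = UNIV)"

definition fin_gen_module :: "('a::comm_ring_1 \<Rightarrow> 'm::ab_group_add \<Rightarrow> 'm) \<Rightarrow> bool" where
  "fin_gen_module scale = (\<exists>S. finite S \<and> module.span scale S = UNIV)"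

end

theory Submission
  imports Defs
begin

lemma indep_modD:
  assumes "indep_mod s N B" "finite F" "F \<subseteq> B" "(\<Sum>b\<in>F. s (u b) b) \<in> module.span s N" "b \<in> F"
  shows "u b = 0"
  using assms unfolding indep_mod_def by blast

lemma steinitz_mod:
  fixes s :: "'k::field \<Rightarrow> 'v::ab_group_add \<Rightarrow> 'v"
  assumes ms: "module s" and fT: "finite T"
  shows "indep_mod s N B \<Longrightarrow> B \<subseteq> module.span s (T \<union> N) \<Longrightarrow> finite B \<and> card B \<le> card T"
  using fT
proof (induction T arbitrary: N B rule: finite_induct)
  interpret module s by (rule ms)
  case empty
  have "B = {}"
  proof (rule ccontr)
    assume "B \<noteq> {}" then obtain b where b: "b \<in> B" by auto
    have "b \<in> span N" using empty(2) b by auto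
    hence "(\<Sum>x\<in>{b}. s ((\<lambda>_. 1::'k) x) x) \<in> span N" by simp
    from indep_modD[OF empty(1) _ _ this, of b] b show False by simp
  qed
  thus ?case by simp
next
  interpret module s by (rule ms)
  case (insert t T')
  show ?case
  proof (cases "B \<subseteq> span (T' \<union> N)")
    case True
    from insert.IH[OF insert.prems(1) True] insert.hyps show ?thesis by auto
  next
    case False
    then obtain b0 where b0: "b0 \<in> B" "b0 \<notin> span (T' \<union> N)" by auto
    have "b0 \<in> span (insert t (T' \<union> N))" using insert.prems(2) b0 by auto
    then obtain k where k: "b0 - s k t \<in> span (T' \<union> N)" by (auto simp: span_insert)
    have k0: "k \<noteq> 0" using k b0 by auto
    let ?N' = "insert b0 N"
    have tin: "t \<in> span (T' \<union> ?N')"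
    proof -
      have k1: "b0 - s k t \<in> span (T' \<union> ?N')" using k span_mono[of "T' \<union> N" "T' \<union> ?N'"] by auto
      have k2: "b0 \<in> span (T' \<union> ?N')" by (rule span_base) auto
      have "s k t \<in> span (T' \<union> ?N')"
        using span_diff[OF k2 k1] by simp
      hence "s (inverse k) (s k t) \<in> span (T' \<union> ?N')" by (rule span_scale)
      thus ?thesis using k0 by simp
    qed
    have sub: "span (insert t T' \<union> N) \<subseteq> span (T' \<union> ?N')"
    proof (rule span_minimal)
      show "insert t T' \<union> N \<subseteq> span (T' \<union> ?N')" using tin span_superset[of "T' \<union> ?N'"] by auto
    qed simp
    have B'sub: "B - {b0} \<subseteq> span (T' \<union> ?N')" using insert.prems(2) sub by auto
    have ind': "indep_mod s ?N' (B - {b0})"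
      unfolding indep_mod_def
    proof (intro allI impI ballI)
      fix F u b assume A: "finite F \<and> F \<subseteq> B - {b0} \<and> (\<Sum>b\<in>F. s (u b) b) \<in> span ?N'" and bF: "b \<in> F"
      then obtain c where c: "(\<Sum>b\<in>F. s (u b) b) - s c b0 \<in> span N" by (auto simp: span_insert)
      let ?u = "u(b0 := - c)"
      have nb0: "b0 \<notin> F" using A by auto
      have "(\<Sum>x\<in>insert b0 F. s (?u x) x) = s (- c) b0 + (\<Sum>x\<in>F. s (u x) x)"
        using A nb0 by (simp add: sum.insert) (rule sum.cong, auto)
      also have "\<dots> = (\<Sum>b\<in>F. s (u b) b) - s c b0" by (simp add: scale_minus_left)
      finally have "(\<Sum>x\<in>insert b0 F. s (?u x) x) \<in> span N" using c by simp
      moreover have "finite (insert b0 F)" "insert b0 F \<subseteq> B" using A b0 by auto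
      ultimately have "?u b = 0" using indep_modD[OF insert.prems(1)] bF by blast
      thus "u b = 0" using bF nb0 by (cases "b = b0") auto
    qed
    from insert.IH[OF ind' B'sub] have "finite (B - {b0})" "card (B - {b0}) \<le> card T'" by auto
    moreover have "B = insert b0 (B - {b0})" using b0 by auto
    ultimately have "finite B" "card B = Suc (card (B - {b0}))"
      by (metis finite_insert, metis card_insert_disjoint Diff_iff singletonI \<open>finite (B - {b0})\<close> \<open>B = insert b0 (B - {b0})\<close>)
    thus ?thesis using \<open>card (B - {b0}) \<le> card T'\<close> insert.hyps by simp
  qed
qed


lemma qd_exists:
  fixes s :: "'k::field \<Rightarrow> 'v::ab_group_add \<Rightarrow> 'v"
  assumes ms: "module s"
  shows "\<exists>B. indep_mod s N B \<and> module.span s (B \<union> N) = UNIV"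
proof -
  interpret vector_space s using ms by (simp add: module_iff_vector_space)
  obtain C where C0: "{} \<subseteq> C" and C: "C \<subseteq> span N" "independent C" "span N \<subseteq> span C"
    by (rule maximal_independent_subset_extend[OF empty_subsetI independent_empty])
  obtain D where D: "C \<subseteq> D" and D0: "D \<subseteq> UNIV" and D': "independent D" "UNIV \<subseteq> span D"
    by (rule maximal_independent_subset_extend[OF subset_UNIV C(2)])
  have ind: "indep_mod s N (D - C)"
    unfolding indep_mod_def
  proof (intro allI impI ballI)
    fix F u b assume A: "finite F \<and> F \<subseteq> D - C \<and> (\<Sum>b\<in>F. s (u b) b) \<in> span N" and bF: "b \<in> F"
    hence "(\<Sum>b\<in>F. s (u b) b) \<in> span C" using C(3) by auto
    then obtain t r where t: "finite t" "t \<subseteq> C" "(\<Sum>b\<in>F. s (u b) b) = (\<Sum>a\<in>t. s (r a) a)"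
      unfolding span_explicit by auto
    have disj: "F \<inter> t = {}" using A t by auto
    let ?w = "\<lambda>v. if v \<in> F then u v else - r v"
    have e1: "(\<Sum>v\<in>F \<union> t. s (?w v) v) = (\<Sum>v\<in>F. s (?w v) v) + (\<Sum>v\<in>t. s (?w v) v)"
      using A t disj by (simp add: sum.union_disjoint)
    have e2: "(\<Sum>v\<in>F. s (?w v) v) = (\<Sum>v\<in>F. s (u v) v)" by (rule sum.cong) auto
    have e3: "(\<Sum>v\<in>t. s (?w v) v) = (\<Sum>v\<in>t. - s (r v) v)"
      using disj by (intro sum.cong) (auto simp: scale_minus_left)
    have e4: "(\<Sum>v\<in>t. - s (r v) v) = - (\<Sum>v\<in>t. s (r v) v)" by (simp add: sum_negf)
    have z: "(\<Sum>v\<in>F \<union> t. s (?w v) v) = 0" unfolding e1 e2 e3 e4 t(3) by simp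
    have fin: "finite (F \<union> t)" using A t by auto
    have sub: "F \<union> t \<subseteq> D" using A t D(1) by auto
    have "?w b = 0" using independentD[OF D'(1) fin sub z, of b] bF by simp
    thus "u b = 0" using bF by simp
  qed
  have "D \<subseteq> span ((D - C) \<union> N)"
  proof
    fix d assume "d \<in> D"
    show "d \<in> span ((D - C) \<union> N)"
    proof (cases "d \<in> C")
      case True
      hence "d \<in> span N" using C(1) by auto
      thus ?thesis using span_mono[of N "(D - C) \<union> N"] by auto
    next
      case False
      thus ?thesis using \<open>d \<in> D\<close> by (intro span_base) auto
    qed
  qed
  hence "span D \<subseteq> span ((D - C) \<union> N)" using span_minimal by auto
  hence "span ((D - C) \<union> N) = UNIV" using D'(2) by auto
  with ind show ?thesis by blast
qed

lemma qd_spec: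
  fixes s :: "'k::field \<Rightarrow> 'v::ab_group_add \<Rightarrow> 'v"
  assumes ms: "module s"
  obtains B where "indep_mod s N B" "module.span s (B \<union> N) = UNIV" "quot_dim s N = card B"
proof -
  let ?B = "SOME B. indep_mod s N B \<and> module.span s (B \<union> N) = UNIV"
  have "indep_mod s N ?B \<and> module.span s (?B \<union> N) = UNIV"
    using someI_ex[OF qd_exists[OF ms]] .
  moreover have "quot_dim s N = card ?B" unfolding quot_dim_def ..
  ultimately show ?thesis using that by blast
qed

lemma qd_le:
  fixes s :: "'k::field \<Rightarrow> 'v::ab_group_add \<Rightarrow> 'v"
  assumes ms: "module s" and fT: "finite T" and sp: "module.span s (T \<union> N) = UNIV"
  shows "quot_dim s N \<le> card T"
proof -
  obtain B where B: "indep_mod s N B" "module.span s (B \<union> N) = UNIV" "quot_dim s N = card B"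
    using qd_spec[OF ms] by blast
  show ?thesis using steinitz_mod[OF ms fT B(1)] sp B(3) by auto
qed

lemma indep_le_qd:
  fixes s :: "'k::field \<Rightarrow> 'v::ab_group_add \<Rightarrow> 'v"
  assumes ms: "module s" and fT: "finite T" and sp: "module.span s (T \<union> N) = UNIV"
    and ind: "indep_mod s N B"
  shows "finite B \<and> card B \<le> quot_dim s N"
proof -
  obtain B0 where B0: "indep_mod s N B0" "module.span s (B0 \<union> N) = UNIV" "quot_dim s N = card B0"
    using qd_spec[OF ms] by blast
  have "finite B0" using steinitz_mod[OF ms fT B0(1)] sp by auto
  show ?thesis using steinitz_mod[OF ms \<open>finite B0\<close> ind] B0 by auto
qed

lemma qd_eq:
  fixes s :: "'k::field \<Rightarrow> 'v::ab_group_add \<Rightarrow> 'v"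
  assumes ms: "module s" and fB: "finite B" and sp: "module.span s (B \<union> N) = UNIV"
    and ind: "indep_mod s N B"
  shows "quot_dim s N = card B"
  using qd_le[OF ms fB sp] indep_le_qd[OF ms fB sp ind] by auto

lemma indep_mod_mono:
  assumes "indep_mod s N B" "module.span s N' \<subseteq> module.span s N"
  shows "indep_mod s N' B"
  using assms unfolding indep_mod_def by blast

lemma family_indep:
  fixes s :: "'k::field \<Rightarrow> 'v::ab_group_add \<Rightarrow> 'v" and f :: "'x \<Rightarrow> 'v"
  assumes ms: "module s" and fX: "finite X" and sp: "module.span s (f ` X \<union> N) = UNIV"
    and qd: "quot_dim s N = card X"
    and sum: "(\<Sum>x\<in>X. s (u x) (f x)) \<in> module.span s N" and x0: "x0 \<in> X"
  shows "u x0 = 0"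
proof (rule ccontr)
  interpret module s by (rule ms)
  assume u0: "u x0 \<noteq> 0"
  let ?R = "f ` (X - {x0}) \<union> N"
  have rest: "(\<Sum>x\<in>X - {x0}. s (u x) (f x)) \<in> span ?R"
    by (intro span_sum span_scale span_base) auto
  have sN: "(\<Sum>x\<in>X. s (u x) (f x)) \<in> span ?R" using sum span_mono[of N ?R] by auto
  have "(\<Sum>x\<in>X. s (u x) (f x)) = s (u x0) (f x0) + (\<Sum>x\<in>X - {x0}. s (u x) (f x))"
    using fX x0 by (simp add: sum.remove)
  hence "s (u x0) (f x0) = (\<Sum>x\<in>X. s (u x) (f x)) - (\<Sum>x\<in>X - {x0}. s (u x) (f x))" by simp
  hence "s (u x0) (f x0) \<in> span ?R" using span_diff[OF sN rest] by simp
  hence "s (inverse (u x0)) (s (u x0) (f x0)) \<in> span ?R" by (rule span_scale)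
  hence fx0: "f x0 \<in> span ?R" using u0 by simp
  have "f ` X \<union> N \<subseteq> span ?R"
  proof
    fix y assume "y \<in> f ` X \<union> N"
    then consider "y = f x0" | "y \<in> ?R" by auto
    thus "y \<in> span ?R" using fx0 span_superset[of ?R] by cases auto
  qed
  hence "span (f ` X \<union> N) \<subseteq> span ?R" using span_minimal by auto
  hence spR: "span (f ` (X - {x0}) \<union> N) = UNIV" using sp by auto
  have "quot_dim s N \<le> card (f ` (X - {x0}))" using qd_le[OF ms _ spR] fX by auto
  also have "\<dots> \<le> card (X - {x0})" using fX by (intro card_image_le) auto
  also have "\<dots> < card X" using fX x0 by (rule card_Diff1_less)
  finally show False using qd by simp
qed



lemma nat_mono_bounded_const:
  fixes f :: "nat \<Rightarrow> nat"
  assumes mono: "\<And>i. f i \<le> f (Suc i)" and bd: "\<And>i. f i \<le> K"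
  shows "\<exists>N. \<forall>i\<ge>N. f i = f N"
proof -
  have fin: "finite (range f)" by (rule finite_subset[of _ "{..K}"]) (use bd in auto)
  have "Max (range f) \<in> range f" using Max_in[OF fin] by blast
  then obtain N where N: "f N = Max (range f)" by (metis imageE)
  have "f i = f N" if "i \<ge> N" for i
  proof -
    have "f N \<le> f i" using lift_Suc_mono_le[of f, OF mono that] .
    moreover have "f i \<le> Max (range f)" using fin by (intro Max_ge) auto
    ultimately show ?thesis using N by simp
  qed
  thus ?thesis by blast
qed

lemma not_in_span_of_indep:
  assumes "indep_mod s N B" "b \<in> B" "module s"
  shows "b \<notin> module.span s N"
proof
  interpret module s by fact
  assume "b \<in> span N"
  hence "(\<Sum>x\<in>{b}. s ((\<lambda>_. 1) x) x) \<in> span N" by simp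
  from indep_modD[OF assms(1) _ _ this, of b] assms(2) show False by simp
qed

lemma qd_mono:
  fixes s :: "'k::field \<Rightarrow> 'v::ab_group_add \<Rightarrow> 'v"
  assumes ms: "module s" and fT: "finite T" and sp: "module.span s (T \<union> J') = UNIV"
    and sub: "J' \<subseteq> J"
  shows "quot_dim s J \<le> quot_dim s J'"
proof -
  interpret module s by fact
  obtain B where B: "indep_mod s J B" "span (B \<union> J) = UNIV" "quot_dim s J = card B"
    using qd_spec[OF ms] by blast
  have "indep_mod s J' B" using indep_mod_mono[OF B(1)] span_mono[OF sub] by auto
  from indep_le_qd[OF ms fT sp this] B(3) show ?thesis by simp
qed

lemma qd_eq_subspace:
  fixes s :: "'k::field \<Rightarrow> 'v::ab_group_add \<Rightarrow> 'v"
  assumes ms: "module s" and fT: "finite T" and sp: "module.span s (T \<union> J') = UNIV"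
    and sub: "J' \<subseteq> J" and subs: "module.subspace s J'" "module.subspace s J"
    and eq: "quot_dim s J = quot_dim s J'"
  shows "J = J'"
proof (rule ccontr)
  interpret module s by fact
  assume "J \<noteq> J'"
  then obtain y where y: "y \<in> J" "y \<notin> J'" using sub by auto
  obtain B where B: "indep_mod s J B" "span (B \<union> J) = UNIV" "quot_dim s J = card B"
    using qd_spec[OF ms] by blast
  have spJ: "span J = J" "span J' = J'" using subs by auto
  have indJ': "indep_mod s J' B" using indep_mod_mono[OF B(1)] span_mono[OF sub] by auto
  have yB: "y \<notin> B" using not_in_span_of_indep[OF B(1) _ ms] y spJ by auto
  have ind: "indep_mod s J' (insert y B)"
    unfolding indep_mod_def
  proof (intro allI impI ballI)
    fix F u b assume A: "finite F \<and> F \<subseteq> insert y B \<and> (\<Sum>b\<in>F. s (u b) b) \<in> span J'" and bF: "b \<in> F"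
    show "u b = 0"
    proof (cases "y \<in> F")
      case False
      hence "F \<subseteq> B" using A by auto
      thus ?thesis using indep_modD[OF indJ', of F u b] A bF by auto
    next
      case True
      have split: "(\<Sum>b\<in>F. s (u b) b) = s (u y) y + (\<Sum>b\<in>F - {y}. s (u b) b)"
        using A True by (simp add: sum.remove)
      have d1: "(\<Sum>b\<in>F. s (u b) b) \<in> J" using A spJ sub by auto
      have d2: "s (u y) y \<in> J" using y subs(2) by (simp add: subspace_scale)
      have d3: "(\<Sum>b\<in>F - {y}. s (u b) b) = (\<Sum>b\<in>F. s (u b) b) - s (u y) y"
        using split by simp
      have "(\<Sum>b\<in>F - {y}. s (u b) b) \<in> J"
        unfolding d3 by (rule subspace_diff[OF subs(2) d1 d2])
      hence "(\<Sum>b\<in>F - {y}. s (u b) b) \<in> span J" by (rule span_base)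
      hence rest0: "\<forall>b\<in>F - {y}. u b = 0"
        using indep_modD[OF B(1), of "F - {y}" u] A by auto
      hence "(\<Sum>b\<in>F - {y}. s (u b) b) = 0" by simp
      hence "s (u y) y \<in> J'" using A split spJ by simp
      hence uy: "u y = 0"
      proof (rule contrapos_pp)
        assume "u y \<noteq> 0"
        hence e: "s (inverse (u y)) (s (u y) y) = y" by simp
        show "s (u y) y \<notin> J'"
        proof
          assume "s (u y) y \<in> J'"
          hence "s (inverse (u y)) (s (u y) y) \<in> J'" by (rule subspace_scale[OF subs(1)])
          thus False using e y(2) by simp
        qed
      qed
      show ?thesis using rest0 uy bF by (cases "b = y") auto
    qed
  qed
  have spT: "span (T \<union> J') = UNIV" by fact
  from indep_le_qd[OF ms fT spT ind] have "finite (insert y B)" "card (insert y B) \<le> quot_dim s J'" by auto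
  hence "Suc (card B) \<le> quot_dim s J'" using yB by simp
  thus False using eq B(3) by simp
qed

lemma dcc_mod:
  fixes s :: "'k::field \<Rightarrow> 'v::ab_group_add \<Rightarrow> 'v"
  assumes ms: "module s" and fT: "finite T" and sp: "module.span s (T \<union> Q) = UNIV"
    and J: "\<And>i. module.subspace s (J i) \<and> Q \<subseteq> J i \<and> J (Suc i) \<subseteq> J i"
  shows "\<exists>N. \<forall>i\<ge>N. J i = J N"
proof -
  interpret module s by fact
  have Js: "\<And>i. module.subspace s (J i)" using J by (rule conjunct1)
  have JQ: "\<And>i. Q \<subseteq> J i" using J by (metis conjunct1 conjunct2)
  have mono: "\<And>i. J (Suc i) \<subseteq> J i" using J by (metis conjunct2)
  have spJ: "span (T \<union> J i) = UNIV" for i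
  proof -
    have "span (T \<union> Q) \<subseteq> span (T \<union> J i)" using JQ[of i] by (intro span_mono) auto
    thus ?thesis using sp by auto
  qed
  let ?f = "\<lambda>i. quot_dim s (J i)"
  have m1: "?f i \<le> ?f (Suc i)" for i
    using qd_mono[OF ms fT spJ[of "Suc i"] mono[of i]] .
  have m2: "?f i \<le> card T" for i using qd_le[OF ms fT spJ[of i]] .
  obtain N where N: "\<forall>i\<ge>N. ?f i = ?f N" using nat_mono_bounded_const[of ?f, OF m1 m2] by blast
  have "J i = J N" if "i \<ge> N" for i
  proof -
    have a: "J i \<subseteq> J N" using lift_Suc_antimono_le[of J, OF mono that] .
    have c: "quot_dim s (J N) = quot_dim s (J i)" using N[rule_format, OF that] by simp
    show ?thesis using qd_eq_subspace[OF ms fT spJ[of i] a Js[of i] Js[of N] c] by simp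
  qed
  thus ?thesis by blast
qed



lemma module_mult: "module ((*) :: 'a::comm_ring_1 \<Rightarrow> 'a \<Rightarrow> 'a)"
  by unfold_locales (simp_all add: algebra_simps)

interpretation R: module "(*) :: 'a::comm_ring_1 \<Rightarrow> 'a \<Rightarrow> 'a"
  by (rule module_mult)

declare R.scale_scale[simp del]

lemma is_ideal_subspace: "is_ideal I = R.subspace I"
  unfolding is_ideal_def ..

lemma ideal_0: "is_ideal I \<Longrightarrow> 0 \<in> I"
  unfolding is_ideal_def by (rule R.subspace_0)
lemma ideal_add: "is_ideal I \<Longrightarrow> x \<in> I \<Longrightarrow> y \<in> I \<Longrightarrow> x + y \<in> I"
  unfolding is_ideal_def by (rule R.subspace_add)
lemma ideal_diff: "is_ideal I \<Longrightarrow> x \<in> I \<Longrightarrow> y \<in> I \<Longrightarrow> x - y \<in> I"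
  unfolding is_ideal_def by (rule R.subspace_diff)
lemma ideal_neg: "is_ideal I \<Longrightarrow> x \<in> I \<Longrightarrow> - x \<in> I"
  unfolding is_ideal_def by (rule R.subspace_neg)
lemma ideal_multL: "is_ideal I \<Longrightarrow> x \<in> I \<Longrightarrow> c * x \<in> I"
  unfolding is_ideal_def by (rule R.subspace_scale)
lemma ideal_multR: "is_ideal I \<Longrightarrow> x \<in> I \<Longrightarrow> x * c \<in> I"
  using ideal_multL[of I x c] by (simp add: mult.commute)
lemma ideal_sum: "is_ideal I \<Longrightarrow> (\<And>x. x \<in> S \<Longrightarrow> f x \<in> I) \<Longrightarrow> sum f S \<in> I"
  unfolding is_ideal_def by (rule R.subspace_sum)
lemma ideal_span: "is_ideal (R.span S)"
  unfolding is_ideal_def by (rule R.subspace_span)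
lemma ideal_span_eq: "is_ideal I \<Longrightarrow> R.span I = I"
  unfolding is_ideal_def by simp
lemma ideal_UNIV_iff: "is_ideal I \<Longrightarrow> (I = UNIV \<longleftrightarrow> (1::'a::comm_ring_1) \<in> I)"
proof
  assume "is_ideal I" "1 \<in> I"
  hence "\<And>c. c * 1 \<in> I" by (intro ideal_multL) auto
  thus "I = UNIV" by auto
qed auto

lemma ideal_chain_Union:
  assumes ne: "C \<noteq> {}" and ch: "\<And>X. X \<in> C \<Longrightarrow> is_ideal X"
    and chain: "\<And>X Y. X \<in> C \<Longrightarrow> Y \<in> C \<Longrightarrow> X \<subseteq> Y \<or> Y \<subseteq> X"
  shows "is_ideal (\<Union>C)"
  unfolding is_ideal_def R.subspace_def
proof (intro conjI allI impI ballI)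
  obtain X where X: "X \<in> C" using ne by auto
  show "(0::'a) \<in> \<Union>C" using ideal_0[OF ch[OF X]] X by auto
next
  fix x y assume "x \<in> \<Union>C" "y \<in> \<Union>C"
  then obtain X Y where XY: "X \<in> C" "Y \<in> C" "x \<in> X" "y \<in> Y" by auto
  show "x + y \<in> \<Union>C"
  proof (cases "X \<subseteq> Y")
    case True thus ?thesis using XY ideal_add[OF ch[OF XY(2)], of x y] by auto
  next
    case False hence "Y \<subseteq> X" using chain[OF XY(1,2)] by auto
    thus ?thesis using XY ideal_add[OF ch[OF XY(1)], of x y] by auto
  qed
next
  fix c x assume "x \<in> \<Union>C"
  then obtain X where X: "X \<in> C" "x \<in> X" by auto
  have "c * x \<in> X" using ideal_multL[OF ch[OF X(1)] X(2)] .
  thus "c * x \<in> \<Union>C" using X(1) by blast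
qed

lemma ideal_Zorn:
  assumes ne: "I0 \<in> S" and S: "\<And>I. I \<in> S \<Longrightarrow> is_ideal I"
    and ch: "\<And>C. C \<noteq> {} \<Longrightarrow> C \<subseteq> S \<Longrightarrow> (\<forall>X\<in>C. \<forall>Y\<in>C. X \<subseteq> Y \<or> Y \<subseteq> X) \<Longrightarrow> \<Union>C \<in> S"
  shows "\<exists>M\<in>S. \<forall>X\<in>S. M \<subseteq> X \<longrightarrow> X = M"
proof (rule subset_Zorn_nonempty)
  show "S \<noteq> {}" using ne by auto
  fix C assume C: "C \<noteq> {}" "subset.chain S C"
  from C(2) have "C \<subseteq> S" "\<forall>X\<in>C. \<forall>Y\<in>C. X \<subseteq> Y \<or> Y \<subseteq> X" unfolding subset_chain_def by auto
  thus "\<Union>C \<in> S" using ch[OF C(1)] by blast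
qed

lemma ideal_acc:
  assumes noeth: "noetherian_ring TYPE('a::comm_ring_1)"
    and C: "\<And>i. is_ideal (C i :: 'a set)" and mono: "\<And>i. C i \<subseteq> C (Suc i)"
  shows "\<exists>i. C (Suc i) \<subseteq> C i"
proof -
  have monole: "C i \<subseteq> C j" if "i \<le> j" for i j using lift_Suc_mono_le[of C, OF mono that] .
  have U: "is_ideal (\<Union>(range C))"
  proof (rule ideal_chain_Union)
    show "X \<subseteq> Y \<or> Y \<subseteq> X" if XY: "X \<in> range C" "Y \<in> range C" for X Y
    proof -
      obtain i j where "X = C i" "Y = C j" using XY by blast
      thus ?thesis using monole[of i j] monole[of j i] by (cases "i \<le> j") auto
    qed
  qed (use C in auto)
  then obtain F where F: "finite F" "\<Union>(range C) = R.span F"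
    using noeth[unfolded noetherian_ring_def, rule_format, OF U] by blast
  have "F \<subseteq> R.span F" by (rule R.span_superset)
  hence "F \<subseteq> \<Union>(range C)" using F(2) by simp
  have "\<exists>N. F \<subseteq> C N" if "finite F" "F \<subseteq> \<Union>(range C)" for F
    using that
  proof (induction F rule: finite_induct)
    case empty show ?case by auto
  next
    case (insert x F)
    then obtain N where N: "F \<subseteq> C N" by auto
    obtain i where i: "x \<in> C i" using insert.prems by auto
    have "insert x F \<subseteq> C (max N i)"
      using N i monole[of N "max N i"] monole[of i "max N i"] by auto
    thus ?case by blast
  qed
  then obtain N where N: "F \<subseteq> C N" using F(1) \<open>F \<subseteq> \<Union>(range C)\<close> by blast
  have "R.span F \<subseteq> C N" using N C[of N] unfolding is_ideal_def by (intro R.span_minimal) auto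
  hence "C (Suc N) \<subseteq> C N" using F(2) by auto
  thus ?thesis by blast
qed

context
  fixes \<phi> :: "'k::field \<Rightarrow> 'a::comm_ring_1"
  assumes hom: "ring_hom \<phi>"
begin

lemma hom_add: "\<phi> (x + y) = \<phi> x + \<phi> y" using hom unfolding ring_hom_def by simp
lemma hom_mult: "\<phi> (x * y) = \<phi> x * \<phi> y" using hom unfolding ring_hom_def by simp
lemma hom_1: "\<phi> 1 = 1" using hom unfolding ring_hom_def by simp
lemma hom_0: "\<phi> 0 = 0"
proof -
  have "\<phi> (0 + 0) = \<phi> 0 + \<phi> 0" by (rule hom_add)
  thus ?thesis by simp
qed

lemma module_sA: "module (\<lambda>c (a::'a). \<phi> c * a)"
  unfolding module_def
proof (intro conjI allI)
  fix a b :: 'k and x y :: 'a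
  show "\<phi> a * (x + y) = \<phi> a * x + \<phi> a * y" by (rule distrib_left)
  show "\<phi> (a + b) * x = \<phi> a * x + \<phi> b * x" unfolding hom_add by (rule distrib_right)
  show "\<phi> a * (\<phi> b * x) = \<phi> (a * b) * x" unfolding hom_mult by (rule mult.assoc[symmetric])
  show "\<phi> 1 * x = x" unfolding hom_1 by (rule mult_1_left)
qed

lemma module_sM: "module scale \<Longrightarrow> module (\<lambda>c x. scale (\<phi> c) x)"
proof -
  assume "module scale"
  then interpret M: module scale .
  show ?thesis
    unfolding module_def
  proof (intro conjI allI)
    fix a b :: 'k and x y
    show "scale (\<phi> a) (x + y) = scale (\<phi> a) x + scale (\<phi> a) y" by (rule M.scale_right_distrib)
    show "scale (\<phi> (a + b)) x = scale (\<phi> a) x + scale (\<phi> b) x" unfolding hom_add by (rule M.scale_left_distrib)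
    show "scale (\<phi> a) (scale (\<phi> b) x) = scale (\<phi> (a * b)) x" unfolding hom_mult by (rule M.scale_scale)
    show "scale (\<phi> 1) x = x" unfolding hom_1 by (rule M.scale_one)
  qed
qed

lemma ideal_subspace_sA: "is_ideal I \<Longrightarrow> module.subspace (\<lambda>c (a::'a). \<phi> c * a) I"
  unfolding is_ideal_def R.subspace_def module.subspace_def[OF module_sA] by blast

lemma submod_subspace_sM:
  assumes "module scale" "module.subspace scale N"
  shows "module.subspace (\<lambda>c x. scale (\<phi> c) x) N"
  using assms unfolding module.subspace_def[OF assms(1)] module.subspace_def[OF module_sM[OF assms(1)]] by blast

lemma span_sM_le:
  assumes ms: "module scale"
  shows "module.span (\<lambda>c x. scale (\<phi> c) x) X \<subseteq> module.span scale X"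
proof -
  interpret M: module scale by fact
  interpret K: module "\<lambda>c x. scale (\<phi> c) x" by (rule module_sM[OF ms])
  show ?thesis
    by (rule K.span_minimal[OF M.span_superset submod_subspace_sM[OF ms M.subspace_span]])
qed

end

lemma maximal_one: "maximal_ideal m \<Longrightarrow> (1::'a::comm_ring_1) \<notin> m"
  unfolding maximal_ideal_def using ideal_UNIV_iff by blast

lemma proper_in_max:
  assumes loc: "local_ring TYPE('a::comm_ring_1)" and mm: "maximal_ideal (m::'a set)"
    and J: "is_ideal J" "1 \<notin> J"
  shows "J \<subseteq> m"
proof -
  let ?S = "{K. is_ideal K \<and> J \<subseteq> K \<and> (1::'a) \<notin> K}"
  have "\<exists>M\<in>?S. \<forall>X\<in>?S. M \<subseteq> X \<longrightarrow> X = M"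
  proof (rule ideal_Zorn)
    show "J \<in> ?S" using J by auto
    show "is_ideal I" if "I \<in> ?S" for I using that by auto
    fix C assume C: "C \<noteq> {}" "C \<subseteq> ?S" "\<forall>X\<in>C. \<forall>Y\<in>C. X \<subseteq> Y \<or> Y \<subseteq> X"
    have "is_ideal (\<Union>C)" by (rule ideal_chain_Union) (use C in auto)
    thus "\<Union>C \<in> ?S" using C by auto
  qed
  then obtain M where M: "is_ideal M" "J \<subseteq> M" "1 \<notin> M" and Mmax: "\<forall>X\<in>?S. M \<subseteq> X \<longrightarrow> X = M" by auto
  have "maximal_ideal M"
    unfolding maximal_ideal_def
  proof (intro conjI allI impI)
    show "is_ideal M" "M \<noteq> UNIV" using M by auto
    fix K assume K: "is_ideal K \<and> M \<subseteq> K"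
    show "K = M \<or> K = UNIV"
    proof (cases "1 \<in> K")
      case True thus ?thesis using K ideal_UNIV_iff by blast
    next
      case False thus ?thesis using K M Mmax by blast
    qed
  qed
  hence "M = m" using loc mm unfolding local_ring_def by blast
  thus ?thesis using M by auto
qed

lemma unit_not_max:
  assumes loc: "local_ring TYPE('a::comm_ring_1)" and mm: "maximal_ideal (m::'a set)"
    and a: "a \<notin> m"
  shows "\<exists>b. a * b = 1"
proof (rule ccontr)
  assume nu: "\<not> (\<exists>b. a * b = 1)"
  have "R.span {a} = range (\<lambda>k. k * a)" by (rule R.span_singleton)
  hence "1 \<notin> R.span {a}" using nu by (auto simp: mult.commute)
  hence "R.span {a} \<subseteq> m" using proper_in_max[OF loc mm ideal_span] by blast
  moreover have "a \<in> R.span {a}" by (rule R.span_base) simp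
  ultimately show False using a by auto
qed

lemma unit_one_minus:
  assumes loc: "local_ring TYPE('a::comm_ring_1)" and mm: "maximal_ideal (m::'a set)"
    and x: "x \<in> m"
  shows "\<exists>b. (1 - x) * b = 1"
proof (rule unit_not_max[OF loc mm])
  have im: "is_ideal m" using mm unfolding maximal_ideal_def by auto
  show "1 - x \<notin> m"
  proof
    assume "1 - x \<in> m"
    hence "(1 - x) + x \<in> m" using ideal_add[OF im _ x] by blast
    thus False using maximal_one[OF mm] by simp
  qed
qed



context
  fixes \<phi> :: "'k::field \<Rightarrow> 'a::comm_ring_1"
  assumes hom: "ring_hom \<phi>"
begin

abbreviation kspan :: "'a set \<Rightarrow> 'a set" where
  "kspan X \<equiv> module.span (\<lambda>c (a::'a). \<phi> c * a) X"

definition Dfin :: "'a set \<Rightarrow> bool" where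
  "Dfin J = (\<exists>P. finite P \<and> kspan (P \<union> J) = UNIV)"

lemma ks_base: "x \<in> X \<Longrightarrow> x \<in> kspan X"
  by (rule module.span_base[OF module_sA[OF hom]])
lemma ks_add: "x \<in> kspan X \<Longrightarrow> y \<in> kspan X \<Longrightarrow> x + y \<in> kspan X"
  by (rule module.span_add[OF module_sA[OF hom]])
lemma ks_scale: "x \<in> kspan X \<Longrightarrow> \<phi> c * x \<in> kspan X"
  using module.span_scale[OF module_sA[OF hom]] by blast
lemma ks_mono: "X \<subseteq> Y \<Longrightarrow> kspan X \<subseteq> kspan Y"
  by (rule module.span_mono[OF module_sA[OF hom]])
lemma ks_superset: "X \<subseteq> kspan X"
  by (rule module.span_superset[OF module_sA[OF hom]])
lemma ks_UNIV: "kspan UNIV = UNIV"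
  by (rule module.span_UNIV[OF module_sA[OF hom]])
lemma ks_zero: "0 \<in> kspan X"
  by (rule module.span_zero[OF module_sA[OF hom]])

lemma D_step_aux:
  assumes J: "is_ideal J" and D1: "Dfin (R.span (insert x J))"
  shows "Dfin (R.span (insert (x ^ i) J))"
proof (induction i)
  case 0
  have "1 \<in> R.span (insert (x ^ 0) J)" by (rule R.span_base) simp
  hence "R.span (insert (x ^ 0) J) = UNIV" using ideal_UNIV_iff[OF ideal_span] by blast
  hence "kspan ({} \<union> R.span (insert (x ^ 0) J)) = UNIV" using ks_UNIV by simp
  thus ?case unfolding Dfin_def by blast
next
  case (Suc i)
  let ?K = "\<lambda>i. R.span (insert (x ^ i) J)"
  have memK: "z \<in> ?K i \<longleftrightarrow> (\<exists>k. z - k * x ^ i \<in> J)" for z i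
    using R.span_insert[of "x ^ i" J] ideal_span_eq[OF J] by auto
  have JK: "J \<subseteq> ?K i" for i using R.span_superset[of "insert (x ^ i) J"] by blast
  obtain Pi where Pi: "finite Pi" "kspan (Pi \<union> ?K i) = UNIV" using Suc.IH unfolding Dfin_def by blast
  obtain P1 where P1: "finite P1" "kspan (P1 \<union> ?K 1) = UNIV"
    using D1 unfolding Dfin_def by auto
  let ?P = "Pi \<union> (\<lambda>p. x ^ i * p) ` P1"
  let ?S = "kspan (?P \<union> ?K (Suc i))"
  have sup: "?P \<union> ?K (Suc i) \<subseteq> ?S" by (rule ks_superset)
  have KS: "?K (Suc i) \<subseteq> ?S" using sup by blast
  have PS: "Pi \<subseteq> ?S" using sup by blast
  have P1S: "x ^ i * p \<in> ?S" if "p \<in> P1" for p using sup that by blast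
  have mulS: "x ^ i * y \<in> ?S" if y: "y \<in> kspan (P1 \<union> ?K 1)" for y
  proof (rule module.span_induct_alt[OF module_sA[OF hom] y, of "\<lambda>y. x ^ i * y \<in> ?S"])
    show "x ^ i * 0 \<in> ?S" using ks_zero by simp
  next
    fix c v y assume 2: "v \<in> P1 \<union> ?K 1" "x ^ i * y \<in> ?S"
    have "x ^ i * v \<in> ?S"
    proof (cases "v \<in> P1")
      case True thus ?thesis using P1S by blast
    next
      case False
      hence vK: "v \<in> ?K 1" using 2(1) by blast
      obtain k where k: "v - k * x ^ 1 \<in> J" using iffD1[OF memK[of v 1] vK] by blast
      have gen: "\<And>a::'a. a * v = a * (v - k * x) + k * (x * a)" by (simp add: algebra_simps)
      have e: "x ^ i * v = x ^ i * (v - k * x ^ 1) + k * x ^ Suc i"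
        using gen[of "x ^ i"] by (simp only: power_one_right power_Suc)
      have "x ^ i * (v - k * x ^ 1) \<in> ?K (Suc i)" using ideal_multL[OF J k] JK by blast
      moreover have "k * x ^ Suc i \<in> ?K (Suc i)"
      proof -
        have "k * x ^ Suc i - k * x ^ Suc i \<in> J" using ideal_0[OF J] by simp
        thus ?thesis using memK[of "k * x ^ Suc i" "Suc i"] by blast
      qed
      ultimately have "x ^ i * v \<in> ?K (Suc i)" unfolding e using ideal_add[OF ideal_span] by blast
      thus ?thesis using KS by blast
    qed
    hence "\<phi> c * (x ^ i * v) + x ^ i * y \<in> ?S" using ks_add ks_scale 2(2) by blast
    moreover have "x ^ i * (\<phi> c * v + y) = \<phi> c * (x ^ i * v) + x ^ i * y" by (simp add: algebra_simps)
    ultimately show "x ^ i * (\<phi> c * v + y) \<in> ?S" by simp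
  qed
  have KiS: "?K i \<subseteq> ?S"
  proof
    fix z assume "z \<in> ?K i"
    then obtain k where k: "z - k * x ^ i \<in> J" using memK by blast
    have "z - k * x ^ i \<in> ?S" using k JK KS by blast
    moreover have "x ^ i * k \<in> ?S" using mulS P1(2) by blast
    ultimately have "(z - k * x ^ i) + x ^ i * k \<in> ?S" using ks_add by blast
    thus "z \<in> ?S" by (simp add: mult.commute)
  qed
  have "kspan (Pi \<union> ?K i) \<subseteq> ?S"
    using module.span_minimal[OF module_sA[OF hom], of "Pi \<union> ?K i" ?S] PS KiS
      module.subspace_span[OF module_sA[OF hom]] by blast
  hence "?S = UNIV" using Pi(2) by auto
  moreover have "finite ?P" using Pi(1) P1(1) by auto
  ultimately show ?case unfolding Dfin_def by blast
qed

lemma D_step: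
  assumes J: "is_ideal J" and D1: "Dfin (R.span (insert x J))" and e: "x ^ e \<in> J"
  shows "Dfin J"
proof -
  have "R.span (insert (x ^ e) J) = J" using e ideal_span_eq[OF J] by (simp add: insert_absorb)
  thus ?thesis using D_step_aux[OF J D1, of e] by simp
qed

lemma D_chain:
  assumes Q: "is_ideal Q" and fH: "finite H" and nil: "\<forall>h\<in>H. \<exists>e. h ^ e \<in> Q"
    and D: "Dfin (R.span (Q \<union> H))"
  shows "Dfin Q"
  using fH nil D
proof (induction H rule: finite_induct)
  case empty thus ?case using ideal_span_eq[OF Q] by simp
next
  case (insert h H)
  let ?J = "R.span (Q \<union> H)"
  have eq: "R.span (Q \<union> insert h H) = R.span (insert h ?J)"
  proof -
    have "Q \<union> insert h H \<subseteq> R.span (insert h ?J)"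
    proof -
      have "Q \<union> H \<subseteq> ?J" by (rule R.span_superset)
      hence "Q \<union> insert h H \<subseteq> insert h ?J" by auto
      thus ?thesis using R.span_superset[of "insert h ?J"] by blast
    qed
    moreover have "insert h ?J \<subseteq> R.span (Q \<union> insert h H)"
    proof -
      have "?J \<subseteq> R.span (Q \<union> insert h H)" by (rule R.span_mono) auto
      moreover have "h \<in> R.span (Q \<union> insert h H)" by (rule R.span_base) auto
      ultimately show ?thesis by blast
    qed
    ultimately show ?thesis unfolding R.span_eq by blast
  qed
  obtain e where e: "h ^ e \<in> Q" using insert.prems(1) by auto
  have "h ^ e \<in> ?J" using e R.span_superset[of "Q \<union> H"] by blast
  hence "Dfin ?J" using D_step[OF ideal_span _ ] insert.prems(2) eq by metis
  thus ?case using insert.IH insert.prems(1) by blast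
qed

end



context
  fixes \<phi> :: "'k::field \<Rightarrow> 'a::comm_ring_1"
  assumes hom: "ring_hom \<phi>"
begin

lemma D_max:
  assumes mm: "maximal_ideal m" and resid: "\<forall>a. \<exists>c. a - \<phi> c \<in> m"
  shows "Dfin \<phi> m"
  unfolding Dfin_def[OF hom]
proof (intro exI conjI)
  show "finite {1::'a}" by simp
  show "kspan \<phi> ({1} \<union> m) = UNIV"
  proof (intro set_eqI iffI)
    fix a :: 'a
    obtain c where c: "a - \<phi> c \<in> m" using resid by blast
    have "\<phi> c * 1 \<in> kspan \<phi> ({1} \<union> m)" by (intro ks_scale[OF hom] ks_base[OF hom]) simp
    moreover have "a - \<phi> c \<in> kspan \<phi> ({1} \<union> m)" using c by (intro ks_base[OF hom]) simp
    ultimately have "\<phi> c * 1 + (a - \<phi> c) \<in> kspan \<phi> ({1} \<union> m)" by (rule ks_add[OF hom])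
    thus "a \<in> kspan \<phi> ({1} \<union> m)" by simp
  qed simp
qed

lemma colon_ideal:
  assumes Q: "is_ideal Q"
  shows "is_ideal {y. z * y \<in> Q}"
  unfolding is_ideal_def R.subspace_def
proof (intro conjI allI impI ballI)
  show "0 \<in> {y. z * y \<in> Q}" using ideal_0[OF Q] by simp
  fix x y assume "x \<in> {y. z * y \<in> Q}" "y \<in> {y. z * y \<in> Q}"
  thus "x + y \<in> {y. z * y \<in> Q}" using ideal_add[OF Q] by (simp add: distrib_left)
next
  fix c x assume "x \<in> {y. z * y \<in> Q}"
  hence "c * (z * x) \<in> Q" using ideal_multL[OF Q] by simp
  thus "c * x \<in> {y. z * y \<in> Q}" by (simp add: mult.left_commute)
qed

lemma avoid:
  assumes loc: "local_ring TYPE('a)" and noeth: "noetherian_ring TYPE('a)"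
    and mm: "maximal_ideal m" and resid: "\<forall>a. \<exists>c. a - \<phi> c \<in> m"
    and a0: "a \<noteq> 0"
  shows "\<exists>I n. 0 < n \<and> colength \<phi> I n \<and> a \<notin> I"
proof -
  have im: "is_ideal m" using mm unfolding maximal_ideal_def by blast
  let ?S = "{Q. is_ideal Q \<and> a \<notin> Q}"
  have "\<exists>M\<in>?S. \<forall>X\<in>?S. M \<subseteq> X \<longrightarrow> X = M"
  proof (rule ideal_Zorn)
    show "{0} \<in> ?S" using a0 unfolding is_ideal_def by simp
    show "is_ideal I" if "I \<in> ?S" for I using that by blast
    fix C assume C: "C \<noteq> {}" "C \<subseteq> ?S" "\<forall>X\<in>C. \<forall>Y\<in>C. X \<subseteq> Y \<or> Y \<subseteq> X"
    have "is_ideal (\<Union>C)" by (rule ideal_chain_Union) (use C in blast)+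
    thus "\<Union>C \<in> ?S" using C by blast
  qed
  then obtain Q where Q: "is_ideal Q" "a \<notin> Q" and Qmax: "\<And>X. is_ideal X \<Longrightarrow> a \<notin> X \<Longrightarrow> Q \<subseteq> X \<Longrightarrow> X = Q"
    by blast
  have Qspan: "R.span Q = Q" by (rule ideal_span_eq[OF Q(1)])
  have ins: "a \<in> R.span (insert z Q)" if "z \<notin> Q" for z
  proof (rule ccontr)
    assume "a \<notin> R.span (insert z Q)"
    moreover have "Q \<subseteq> R.span (insert z Q)" using R.span_superset[of "insert z Q"] by blast
    ultimately have "R.span (insert z Q) = Q" using Qmax[OF ideal_span] by blast
    moreover have "z \<in> R.span (insert z Q)" by (rule R.span_base) simp
    ultimately show False using that by blast
  qed
  have insE: "\<exists>k. a - k * z \<in> Q" if "z \<notin> Q" for z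
    using ins[OF that] R.span_insert[of z Q] Qspan by auto
  have one: "(1::'a) \<notin> Q"
  proof
    assume "1 \<in> Q" hence "a * 1 \<in> Q" using ideal_multL[OF Q(1)] by blast
    thus False using Q(2) by simp
  qed
  have Qm: "Q \<subseteq> m" by (rule proper_in_max[OF loc mm Q(1) one])
  have ax: "a * x \<in> Q" if x: "x \<in> m" for x
  proof (rule ccontr)
    assume "a * x \<notin> Q"
    then obtain k where k: "a - k * (a * x) \<in> Q" using insE by blast
    have "k * x \<in> m" using ideal_multL[OF im x] .
    then obtain b where b: "(1 - k * x) * b = 1" using unit_one_minus[OF loc mm] by blast
    have "a - k * (a * x) = a * (1 - k * x)" by (simp add: algebra_simps)
    hence "a * (1 - k * x) * b \<in> Q" using k ideal_multR[OF Q(1)] by metis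
    hence "a \<in> Q" using b by (simp add: mult.assoc)
    thus False using Q(2) by simp
  qed
  have nil: "\<exists>e. x ^ e \<in> Q" if x: "x \<in> m" for x
  proof -
    let ?C = "\<lambda>i. {y. x ^ i * y \<in> Q}"
    have Ci: "is_ideal (?C i)" for i by (rule colon_ideal[OF Q(1)])
    have Cm: "?C i \<subseteq> ?C (Suc i)" for i
    proof
      fix y assume "y \<in> ?C i"
      hence "x * (x ^ i * y) \<in> Q" using ideal_multL[OF Q(1)] by blast
      thus "y \<in> ?C (Suc i)" by (simp add: mult.assoc)
    qed
    obtain i0 where i0: "?C (Suc i0) \<subseteq> ?C i0" using ideal_acc[of ?C, OF noeth Ci Cm] by blast
    show ?thesis
    proof (rule ccontr)
      assume "\<not> (\<exists>e. x ^ e \<in> Q)"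
      hence "x ^ i0 \<notin> Q" by blast
      then obtain k where k: "a - k * x ^ i0 \<in> Q" using insE by blast
      have "(a - k * x ^ i0) * x \<in> Q" using ideal_multR[OF Q(1) k] .
      moreover have "a * x \<in> Q" using ax[OF x] .
      ultimately have "a * x - (a - k * x ^ i0) * x \<in> Q" using ideal_diff[OF Q(1)] by blast
      moreover have gen: "\<And>p::'a. a * x - (a - k * p) * x = (x * p) * k" by (simp add: algebra_simps)
      ultimately have "(x * x ^ i0) * k \<in> Q" by metis
      hence "k \<in> ?C (Suc i0)" by simp
      hence "x ^ i0 * k \<in> Q" using i0 by blast
      hence "(a - k * x ^ i0) + x ^ i0 * k \<in> Q" using ideal_add[OF Q(1) k] by blast
      hence "a \<in> Q" by (simp add: mult.commute)
      thus False using Q(2) by simp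
    qed
  qed
  obtain G where G: "finite G" "m = R.span G" using noeth im unfolding noetherian_ring_def by blast
  have Gm: "G \<subseteq> m" using G(2) R.span_superset[of G] by blast
  have "R.span (Q \<union> G) = m"
  proof
    show "R.span (Q \<union> G) \<subseteq> m" using Qm Gm im unfolding is_ideal_def by (intro R.span_minimal) auto
    show "m \<subseteq> R.span (Q \<union> G)" using G(2) R.span_mono[of G "Q \<union> G"] by blast
  qed
  hence "Dfin \<phi> (R.span (Q \<union> G))" using D_max[OF mm resid] by simp
  moreover have "\<forall>h\<in>G. \<exists>e. h ^ e \<in> Q" using nil Gm by blast
  ultimately have DQ: "Dfin \<phi> Q" using D_chain[OF hom Q(1) G(1)] by blast
  then obtain P where P: "finite P" "kspan \<phi> (P \<union> Q) = UNIV" unfolding Dfin_def[OF hom] by blast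
  note msA = module_sA[OF hom]
  have art: "artinian_quotient Q"
    unfolding artinian_quotient_def
  proof (intro allI impI)
    fix J :: "nat \<Rightarrow> 'a set"
    assume J: "\<forall>i. is_ideal (J i) \<and> Q \<subseteq> J i \<and> J (Suc i) \<subseteq> J i"
    show "\<exists>N. \<forall>i\<ge>N. J i = J N"
    proof (rule dcc_mod[OF msA P(1) P(2)])
      fix i show "module.subspace (\<lambda>c a. \<phi> c * a) (J i) \<and> Q \<subseteq> J i \<and> J (Suc i) \<subseteq> J i"
        using J ideal_subspace_sA[OF hom] by blast
    qed
  qed
  define n where "n = quot_dim (\<lambda>c a. \<phi> c * a) Q"
  have n0: "0 < n"
  proof (rule ccontr)
    assume "\<not> 0 < n"
    hence n0: "n = 0" by simp
    obtain B where B: "indep_mod (\<lambda>c a. \<phi> c * a) Q B" "kspan \<phi> (B \<union> Q) = UNIV"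
      "quot_dim (\<lambda>c a. \<phi> c * a) Q = card B" using qd_spec[OF msA] by blast
    have "finite B" using indep_le_qd[OF msA P(1) P(2) B(1)] by blast
    hence "B = {}" using B(3) n0 n_def by simp
    hence "kspan \<phi> Q = UNIV" using B(2) by simp
    moreover have "kspan \<phi> Q = Q"
      using module.span_eq_iff[OF msA] ideal_subspace_sA[OF hom Q(1)] by blast
    ultimately show False using Q(2) by simp
  qed
  have "colength \<phi> Q n" unfolding colength_def n_def using Q(1) art by blast
  thus ?thesis using n0 Q(2) by blast
qed

end



lemma family_qd:
  fixes s :: "'k::field \<Rightarrow> 'v::ab_group_add \<Rightarrow> 'v" and f :: "'x \<Rightarrow> 'v"
  assumes ms: "module s" and fX: "finite X" and sp: "module.span s (f ` X \<union> N) = UNIV"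
    and ind: "\<And>u. (\<Sum>x\<in>X. s (u x) (f x)) \<in> module.span s N \<Longrightarrow> \<forall>x\<in>X. u x = 0"
  shows "quot_dim s N = card X"
proof -
  interpret module s by fact
  have inj: "inj_on f X"
  proof (rule inj_onI, rule ccontr)
    fix x y assume xy: "x \<in> X" "y \<in> X" "f x = f y" "x \<noteq> y"
    let ?u = "\<lambda>z. if z = x then 1 else if z = y then - 1 else (0::'k)"
    have "(\<Sum>z\<in>X. s (?u z) (f z)) = (\<Sum>z\<in>{x, y}. s (?u z) (f z))"
      using fX xy by (intro sum.mono_neutral_right) auto
    also have "\<dots> = 0" using xy by (simp add: scale_minus_left)
    finally have "(\<Sum>z\<in>X. s (?u z) (f z)) \<in> span N" using span_zero by simp
    hence "\<forall>z\<in>X. ?u z = 0" by (rule ind)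
    thus False using xy(1) by force
  qed
  have indm: "indep_mod s N (f ` X)"
    unfolding indep_mod_def
  proof (intro allI impI ballI)
    fix F u b assume A: "finite F \<and> F \<subseteq> f ` X \<and> (\<Sum>b\<in>F. s (u b) b) \<in> span N" and bF: "b \<in> F"
    let ?w = "\<lambda>x. if f x \<in> F then u (f x) else 0"
    have "(\<Sum>x\<in>X. s (?w x) (f x)) = (\<Sum>x\<in>X. (if f x \<in> F then s (u (f x)) (f x) else 0))"
      by (intro sum.cong) auto
    also have "\<dots> = (\<Sum>x\<in>{x\<in>X. f x \<in> F}. s (u (f x)) (f x))"
      using fX by (simp add: sum.inter_filter)
    also have "\<dots> = (\<Sum>b\<in>f ` {x\<in>X. f x \<in> F}. s (u b) b)"
    proof -
      have "inj_on f {x\<in>X. f x \<in> F}" using inj by (rule inj_on_subset) auto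
      thus ?thesis by (simp add: sum.reindex)
    qed
    also have "f ` {x\<in>X. f x \<in> F} = F" using A by auto
    finally have "(\<Sum>x\<in>X. s (?w x) (f x)) \<in> span N" using A by simp
    hence "\<forall>x\<in>X. ?w x = 0" by (rule ind)
    moreover obtain x where "x \<in> X" "f x = b" using A bF by blast
    ultimately show "u b = 0" using bF by force
  qed
  have "quot_dim s N = card (f ` X)" using qd_eq[OF ms _ sp indm] fX by simp
  thus ?thesis using card_image[OF inj] by simp
qed



context
  fixes \<phi> :: "'k::field \<Rightarrow> 'a::comm_ring_1" and scale :: "'a \<Rightarrow> 'm::ab_group_add \<Rightarrow> 'm"
  assumes hom: "ring_hom \<phi>" and ms: "module scale"
begin

lemma IM_sub: "module.subspace scale (ideal_times scale I)"
  unfolding ideal_times_def by (rule module.subspace_span[OF ms])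

lemma IM_mem: "i \<in> I \<Longrightarrow> scale i y \<in> ideal_times scale I"
  unfolding ideal_times_def by (rule module.span_base[OF ms]) blast

lemma IM_sum: "(\<And>g. g \<in> G \<Longrightarrow> f g \<in> I) \<Longrightarrow> (\<Sum>g\<in>G. scale (f g) g) \<in> ideal_times scale I"
  by (rule module.subspace_sum[OF ms IM_sub], rule IM_mem) simp

lemma IM_sM_span: "module.span (\<lambda>c x. scale (\<phi> c) x) (ideal_times scale I) = ideal_times scale I"
  using module.span_eq_iff[OF module_sM[OF hom ms]] submod_subspace_sM[OF hom ms IM_sub] by blast

lemma decomp:
  assumes fC: "finite C" and sp: "kspan \<phi> (C \<union> I) = UNIV" and I: "is_ideal I"
  shows "\<exists>u. a - (\<Sum>c\<in>C. \<phi> (u c) * c) \<in> I"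
proof -
  note msA = module_sA[OF hom]
  have "a \<in> kspan \<phi> (C \<union> I)" using sp by simp
  then obtain x y where xy: "a = x + y" "x \<in> kspan \<phi> C" "y \<in> kspan \<phi> I"
    unfolding module.span_Un[OF msA] by blast
  obtain u where u: "x = (\<Sum>c\<in>C. \<phi> (u c) * c)"
    using xy(2) unfolding module.span_finite[OF msA fC] by blast
  have "kspan \<phi> I = I" using module.span_eq_iff[OF msA] ideal_subspace_sA[OF hom I] by blast
  hence "a - (\<Sum>c\<in>C. \<phi> (u c) * c) \<in> I" using xy u by simp
  thus ?thesis by blast
qed

lemma sum_swap:
  assumes fC: "finite C" and fG: "finite G"
  shows "(\<Sum>p\<in>C \<times> G. scale (\<phi> (u p)) (scale (fst p) (snd p))) =
         (\<Sum>g\<in>G. scale (\<Sum>c\<in>C. \<phi> (u (c, g)) * c) g)"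
proof -
  have "(\<Sum>p\<in>C \<times> G. scale (\<phi> (u p)) (scale (fst p) (snd p))) =
        (\<Sum>c\<in>C. \<Sum>g\<in>G. scale (\<phi> (u (c, g))) (scale c g))"
    by (simp add: sum.cartesian_product case_prod_beta)
  also have "\<dots> = (\<Sum>g\<in>G. \<Sum>c\<in>C. scale (\<phi> (u (c, g)) * c) g)"
    by (subst sum.swap) (simp add: module.scale_scale[OF ms])
  also have "\<dots> = (\<Sum>g\<in>G. scale (\<Sum>c\<in>C. \<phi> (u (c, g)) * c) g)"
    by (simp add: module.scale_sum_left[OF ms])
  finally show ?thesis .
qed

lemma spanning:
  assumes fC: "finite C" and sp: "kspan \<phi> (C \<union> I) = UNIV" and I: "is_ideal I"
    and fG: "finite G" and spG: "module.span scale G = UNIV"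
  shows "module.span (\<lambda>c x. scale (\<phi> c) x)
           ((\<lambda>p. scale (fst p) (snd p)) ` (C \<times> G) \<union> ideal_times scale I) = UNIV"
proof -
  note msM = module_sM[OF hom ms]
  let ?f = "\<lambda>p. scale (fst p) (snd p)"
  let ?S = "module.span (\<lambda>c x. scale (\<phi> c) x) (?f ` (C \<times> G) \<union> ideal_times scale I)"
  have "x \<in> ?S" for x
  proof -
    have "x \<in> range (\<lambda>u. \<Sum>g\<in>G. scale (u g) g)"
      using spG module.span_finite[OF ms fG] by simp
    then obtain a where a: "x = (\<Sum>g\<in>G. scale (a g) g)" by blast
    have "\<forall>g. \<exists>u. a g - (\<Sum>c\<in>C. \<phi> (u c) * c) \<in> I" using decomp[OF fC sp I] by blast
    hence "\<exists>U. \<forall>g. a g - (\<Sum>c\<in>C. \<phi> (U g c) * c) \<in> I" by (rule choice)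
    then obtain U where U0: "\<forall>g. a g - (\<Sum>c\<in>C. \<phi> (U g c) * c) \<in> I" by blast
    have U: "\<And>g. a g - (\<Sum>c\<in>C. \<phi> (U g c) * c) \<in> I" using U0 by blast
    let ?v = "\<lambda>p. U (snd p) (fst p)"
    have e1: "(\<Sum>p\<in>C \<times> G. scale (\<phi> (?v p)) (?f p)) = (\<Sum>g\<in>G. scale (\<Sum>c\<in>C. \<phi> (U g c) * c) g)"
      using sum_swap[OF fC fG, of ?v] by simp
    have in1: "(\<Sum>p\<in>C \<times> G. scale (\<phi> (?v p)) (?f p)) \<in> ?S"
      by (intro module.span_sum[OF msM] module.span_scale[OF msM] module.span_base[OF msM]) auto
    have in2: "(\<Sum>g\<in>G. scale (a g - (\<Sum>c\<in>C. \<phi> (U g c) * c)) g) \<in> ?S"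
    proof -
      have "(\<Sum>g\<in>G. scale (a g - (\<Sum>c\<in>C. \<phi> (U g c) * c)) g) \<in> ideal_times scale I"
        by (rule IM_sum) (rule U)
      moreover have "ideal_times scale I \<subseteq> ?S"
        using module.span_superset[OF msM, of "?f ` (C \<times> G) \<union> ideal_times scale I"] by blast
      ultimately show ?thesis by blast
    qed
    have "x = (\<Sum>g\<in>G. scale (\<Sum>c\<in>C. \<phi> (U g c) * c) g) + (\<Sum>g\<in>G. scale (a g - (\<Sum>c\<in>C. \<phi> (U g c) * c)) g)"
    proof -
      have "\<And>g. scale (a g) g = scale (\<Sum>c\<in>C. \<phi> (U g c) * c) g + scale (a g - (\<Sum>c\<in>C. \<phi> (U g c) * c)) g"
        by (simp add: module.scale_left_distrib[OF ms, symmetric])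
      thus ?thesis unfolding a sum.distrib[symmetric] by simp
    qed
    thus ?thesis using module.span_add[OF msM in1[unfolded e1] in2] by simp
  qed
  thus ?thesis by blast
qed

lemma coord:
  assumes fB: "finite B" and indB: "\<not> module.dependent scale B" and spB: "module.span scale B = UNIV"
    and I: "is_ideal I" and x: "(\<Sum>b\<in>B. scale (a b) b) \<in> ideal_times scale I"
  shows "\<forall>b\<in>B. a b \<in> I"
proof -
  let ?Z = "{(\<Sum>b\<in>B. scale (w b) b) | w. \<forall>b\<in>B. w b \<in> I}"
  have Zsub: "module.subspace scale ?Z"
    unfolding module.subspace_def[OF ms]
  proof (intro conjI ballI allI)
    show "0 \<in> ?Z" by (rule CollectI, rule exI[of _ "\<lambda>_. 0"]) (simp add: ideal_0[OF I] module.scale_zero_left[OF ms])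
  next
    fix x y assume "x \<in> ?Z" "y \<in> ?Z"
    then obtain w1 w2 where w: "x = (\<Sum>b\<in>B. scale (w1 b) b)" "\<forall>b\<in>B. w1 b \<in> I"
      "y = (\<Sum>b\<in>B. scale (w2 b) b)" "\<forall>b\<in>B. w2 b \<in> I" by blast
    have "x + y = (\<Sum>b\<in>B. scale (w1 b + w2 b) b)"
      unfolding w sum.distrib[symmetric] by (simp add: module.scale_left_distrib[OF ms])
    moreover have "\<forall>b\<in>B. w1 b + w2 b \<in> I" using w ideal_add[OF I] by blast
    ultimately show "x + y \<in> ?Z" by (intro CollectI exI[of _ "\<lambda>b. w1 b + w2 b"]) simp
  next
    fix c x assume "x \<in> ?Z"
    then obtain w where w: "x = (\<Sum>b\<in>B. scale (w b) b)" "\<forall>b\<in>B. w b \<in> I" by blast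
    have "scale c x = (\<Sum>b\<in>B. scale (c * w b) b)"
      unfolding w by (simp add: module.scale_sum_right[OF ms] module.scale_scale[OF ms])
    moreover have "\<forall>b\<in>B. c * w b \<in> I" using w ideal_multL[OF I] by blast
    ultimately show "scale c x \<in> ?Z" by (intro CollectI exI[of _ "\<lambda>b. c * w b"]) simp
  qed
  have "ideal_times scale I \<subseteq> ?Z"
    unfolding ideal_times_def
  proof (rule module.span_minimal[OF ms _ Zsub])
    show "{scale a x |a x. a \<in> I} \<subseteq> ?Z"
    proof
      fix z assume "z \<in> {scale a x |a x. a \<in> I}"
      then obtain i y where iy: "z = scale i y" "i \<in> I" by blast
      have "y \<in> range (\<lambda>u. \<Sum>b\<in>B. scale (u b) b)"
        using spB module.span_finite[OF ms fB] by simp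
      then obtain v where v: "y = (\<Sum>b\<in>B. scale (v b) b)" by blast
      have "z = (\<Sum>b\<in>B. scale (i * v b) b)"
        unfolding iy v by (simp add: module.scale_sum_right[OF ms] module.scale_scale[OF ms])
      moreover have "\<forall>b\<in>B. i * v b \<in> I" using iy ideal_multR[OF I] by blast
      ultimately show "z \<in> ?Z" by (intro CollectI exI[of _ "\<lambda>b. i * v b"]) simp
    qed
  qed
  with x obtain w where w: "(\<Sum>b\<in>B. scale (a b) b) = (\<Sum>b\<in>B. scale (w b) b)" "\<forall>b\<in>B. w b \<in> I" by blast
  have "(\<Sum>b\<in>B. scale (a b - w b) b) = 0"
    using w(1) by (simp add: module.scale_left_diff_distrib[OF ms] sum_subtractf)
  hence "\<forall>b\<in>B. a b - w b = 0"
    using module.independentD[OF ms indB fB subset_refl, of "\<lambda>b. a b - w b"] by blast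
  thus ?thesis using w(2) by simp
qed

end



lemma span_fin_subset:
  assumes ms: "module scale" and s: "x \<in> module.span scale B"
  shows "\<exists>t. finite t \<and> t \<subseteq> B \<and> x \<in> module.span scale t"
proof -
  interpret module scale by fact
  obtain t r where t: "finite t" "t \<subseteq> B" "x = (\<Sum>a\<in>t. scale (r a) a)"
    using s unfolding span_explicit by blast
  have "x \<in> span t" unfolding t(3) by (intro span_sum span_scale span_base)
  thus ?thesis using t by blast
qed

lemma finite_basis:
  assumes ms: "module scale" and fr: "free_module scale" and fg: "fin_gen_module scale"
  shows "\<exists>B. finite B \<and> \<not> module.dependent scale B \<and> module.span scale B = UNIV"
proof -
  interpret module scale by fact
  obtain B where B: "independent B" "span B = UNIV" using fr unfolding free_module_def by blast
  obtain S where S: "finite S" "span S = UNIV" using fg unfolding fin_gen_module_def by blast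
  have "\<forall>s\<in>S. \<exists>t. finite t \<and> t \<subseteq> B \<and> s \<in> span t"
    using span_fin_subset[OF ms] B(2) by blast
  hence "\<exists>T. \<forall>s\<in>S. finite (T s) \<and> T s \<subseteq> B \<and> s \<in> span (T s)" by (rule bchoice)
  then obtain T where T: "\<forall>s\<in>S. finite (T s) \<and> T s \<subseteq> B \<and> s \<in> span (T s)" by blast
  let ?T = "\<Union>s\<in>S. T s"
  have fT: "finite ?T" using S(1) T by blast
  have TB: "?T \<subseteq> B" using T by blast
  have "S \<subseteq> span ?T"
  proof
    fix s assume "s \<in> S"
    hence "s \<in> span (T s)" "T s \<subseteq> ?T" using T by auto
    thus "s \<in> span ?T" using span_mono by blast
  qed
  hence "span S \<subseteq> span ?T" using span_minimal by blast
  hence "B \<subseteq> span ?T" using S(2) by auto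
  hence "B = ?T" using spanning_subset_independent[OF TB B(1)] by blast
  thus ?thesis using fT B by auto
qed

lemma nakayama:
  fixes scale :: "'a::comm_ring_1 \<Rightarrow> 'm::ab_group_add \<Rightarrow> 'm"
  assumes loc: "local_ring TYPE('a)" and mm: "maximal_ideal m" and ms: "module scale"
    and fS: "finite S" and spS: "module.span scale S = UNIV"
    and hyp: "module.span scale (G \<union> ideal_times scale m) = UNIV"
  shows "module.span scale G = UNIV"
proof -
  interpret module scale by fact
  have im: "is_ideal m" using mm unfolding maximal_ideal_def by blast
  have "span (G \<union> X) = UNIV \<longrightarrow> span G = UNIV" if fX: "finite X" for X
    using fX
  proof (induction X rule: finite_induct)
    case empty show ?case by simp
  next
    case (insert x X)
    show ?case
    proof
      assume full: "span (G \<union> insert x X) = UNIV"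
      let ?W = "span (G \<union> X)"
      let ?Z = "{w + scale t x | w t. w \<in> ?W \<and> t \<in> m}"
      have Zsub: "subspace ?Z"
        unfolding subspace_def
      proof (intro conjI ballI allI)
        have "0 + scale 0 x = 0" by simp
        thus "0 \<in> ?Z" using span_zero ideal_0[OF im] by (metis (mono_tags, lifting) mem_Collect_eq)
      next
        fix y z assume "y \<in> ?Z" "z \<in> ?Z"
        then obtain w1 t1 w2 t2 where w: "y = w1 + scale t1 x" "w1 \<in> ?W" "t1 \<in> m"
          "z = w2 + scale t2 x" "w2 \<in> ?W" "t2 \<in> m" by blast
        have "y + z = (w1 + w2) + scale (t1 + t2) x" unfolding w by (simp add: scale_left_distrib)
        moreover have "w1 + w2 \<in> ?W" using w span_add by blast
        moreover have "t1 + t2 \<in> m" using w ideal_add[OF im] by blast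
        ultimately show "y + z \<in> ?Z" by blast
      next
        fix c z assume "z \<in> ?Z"
        then obtain w t where w: "z = w + scale t x" "w \<in> ?W" "t \<in> m" by blast
        have "scale c z = scale c w + scale (c * t) x" unfolding w by (simp add: scale_right_distrib)
        moreover have "scale c w \<in> ?W" using w span_scale by blast
        moreover have "c * t \<in> m" using w ideal_multL[OF im] by blast
        ultimately show "scale c z \<in> ?Z" by blast
      qed
      have IMZ: "ideal_times scale m \<subseteq> ?Z"
        unfolding ideal_times_def
      proof (rule span_minimal[OF _ Zsub])
        show "{scale a y |a y. a \<in> m} \<subseteq> ?Z"
        proof
          fix z assume "z \<in> {scale a y |a y. a \<in> m}"
          then obtain a y where ay: "z = scale a y" "a \<in> m" by blast
          have "y \<in> span (insert x (G \<union> X))" using full by simp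
          then obtain k where k: "y - scale k x \<in> ?W" unfolding span_insert by blast
          have "z = scale a (y - scale k x) + scale (a * k) x"
            unfolding ay by (simp add: scale_right_diff_distrib)
          moreover have "scale a (y - scale k x) \<in> ?W" using k span_scale by blast
          moreover have "a * k \<in> m" using ay ideal_multR[OF im] by blast
          ultimately show "z \<in> ?Z" by blast
        qed
      qed
      have "x \<in> span (G \<union> ideal_times scale m)" using hyp by simp
      then obtain g z where gz: "x = g + z" "g \<in> span G" "z \<in> span (ideal_times scale m)"
        unfolding span_Un by blast
      have "span (ideal_times scale m) = ideal_times scale m"
        unfolding ideal_times_def by (rule span_span)
      hence "z \<in> ?Z" using gz IMZ by blast
      then obtain w t where wt: "z = w + scale t x" "w \<in> ?W" "t \<in> m" by blast
      have gW: "g \<in> ?W" using gz(2) span_mono[of G "G \<union> X"] by blast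
      have "scale (1 - t) x = g + w" using gz(1) wt(1) by (simp add: scale_left_diff_distrib algebra_simps)
      hence s1: "scale (1 - t) x \<in> ?W" using gW wt(2) span_add by simp
      obtain b where b: "(1 - t) * b = 1" using unit_one_minus[OF loc mm wt(3)] by blast
      have "scale b (scale (1 - t) x) = x" using b by (simp add: mult.commute)
      hence xW: "x \<in> ?W" using span_scale[OF s1, of b] by simp
      have "G \<union> insert x X \<subseteq> ?W" using xW span_superset[of "G \<union> X"] by blast
      hence "span (G \<union> insert x X) \<subseteq> ?W" using span_minimal[OF _ subspace_span] by blast
      hence "?W = UNIV" using full by blast
      thus "span G = UNIV" using insert.IH by blast
    qed
  qed
  hence "span (G \<union> S) = UNIV \<longrightarrow> span G = UNIV" using fS by blast
  moreover have "span (G \<union> S) = UNIV" using span_mono[of S "G \<union> S"] spS by blast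
  ultimately show ?thesis by blast
qed



lemma span_one_m:
  assumes hom: "ring_hom \<phi>" and resid: "\<forall>a. \<exists>c. a - \<phi> c \<in> m"
  shows "kspan \<phi> ({1} \<union> m) = UNIV"
proof (intro set_eqI iffI)
  fix a
  obtain c where c: "a - \<phi> c \<in> m" using resid by blast
  have "\<phi> c * 1 \<in> kspan \<phi> ({1} \<union> m)" by (intro ks_scale[OF hom] ks_base[OF hom]) simp
  moreover have "a - \<phi> c \<in> kspan \<phi> ({1} \<union> m)" using c by (intro ks_base[OF hom]) simp
  ultimately have "\<phi> c * 1 + (a - \<phi> c) \<in> kspan \<phi> ({1} \<union> m)" by (rule ks_add[OF hom])
  thus "a \<in> kspan \<phi> ({1} \<union> m)" by simp
qed simp

lemma indep_one_m:
  assumes hom: "ring_hom \<phi>" and mm: "maximal_ideal m"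
  shows "indep_mod (\<lambda>c a. \<phi> c * a) m {1}"
  unfolding indep_mod_def
proof (intro allI impI ballI)
  fix F u b assume A: "finite F \<and> F \<subseteq> {1} \<and> (\<Sum>b\<in>F. \<phi> (u b) * b) \<in> kspan \<phi> m" and bF: "b \<in> F"
  have im: "is_ideal m" using mm unfolding maximal_ideal_def by blast
  have F: "F = {1}" using A bF by blast
  have "kspan \<phi> m = m" using module.span_eq_iff[OF module_sA[OF hom]] ideal_subspace_sA[OF hom im] by blast
  hence u1: "\<phi> (u 1) \<in> m" using A F by simp
  show "u b = 0"
  proof (rule ccontr)
    assume "u b \<noteq> 0"
    hence "u 1 \<noteq> 0" using F bF by simp
    hence "\<phi> (u 1) * \<phi> (inverse (u 1)) = 1" using hom_mult[OF hom, symmetric] hom_1[OF hom] by simp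
    moreover have "\<phi> (u 1) * \<phi> (inverse (u 1)) \<in> m" using ideal_multR[OF im u1] .
    ultimately show False using maximal_one[OF mm] by simp
  qed
qed

theorem proposition3:
  fixes \<phi> :: "'k::field \<Rightarrow> 'a::comm_ring_1"
    and scale :: "'a \<Rightarrow> 'm::ab_group_add \<Rightarrow> 'm"
    and m :: "'a set"
  assumes "alg_closed TYPE('k)"
    and "ring_hom \<phi>"
    and "local_ring TYPE('a)" and "noetherian_ring TYPE('a)"
    and "maximal_ideal m"
    and "\<forall>a. \<exists>c. a - \<phi> c \<in> m"
    and "module scale" and "fin_gen_module scale"
  shows "free_module scale \<longleftrightarrow>
    (\<forall>n::nat. \<forall>I. n > 0 \<and> colength \<phi> I n \<longrightarrow>
       real (tensor_quot_dim \<phi> scale I) / real n = real (tensor_quot_dim \<phi> scale m))"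
proof -
  note hom = assms(2) and loc = assms(3) and noeth = assms(4) and mm = assms(5)
    and resid = assms(6) and ms = assms(7) and fg = assms(8)
  note msA = module_sA[OF hom] and msM = module_sM[OF hom ms]
  have im: "is_ideal m" using mm unfolding maximal_ideal_def by blast
  let ?sA = "\<lambda>c (a::'a). \<phi> c * a"
  let ?sM = "\<lambda>c x. scale (\<phi> c) x"
  let ?f = "\<lambda>p. scale (fst p) (snd p)"
  obtain S where S: "finite S" "module.span scale S = UNIV" using fg unfolding fin_gen_module_def by blast
  have kI: "kspan \<phi> I = I" if "is_ideal I" for I
    using module.span_eq_iff[OF msA] ideal_subspace_sA[OF hom that] by blast
  have getC: "\<exists>C. finite C \<and> indep_mod ?sA I C \<and> kspan \<phi> (C \<union> I) = UNIV \<and> card C = n"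
    if "0 < n" "colength \<phi> I n" for I n
  proof -
    obtain C where C: "indep_mod ?sA I C" "kspan \<phi> (C \<union> I) = UNIV" "quot_dim ?sA I = card C"
      using qd_spec[OF msA] by blast
    have "card C = n" using C(3) that(2) unfolding colength_def by simp
    hence "finite C" using that(1) card_ge_0_finite by blast
    thus ?thesis using C \<open>card C = n\<close> by blast
  qed
  show ?thesis
  proof
    assume fr: "free_module scale"
    obtain B where B: "finite B" "\<not> module.dependent scale B" "module.span scale B = UNIV"
      using finite_basis[OF ms fr fg] by blast
    have tq: "tensor_quot_dim \<phi> scale I = card C * card B"
      if I: "is_ideal I" and C: "finite C" "indep_mod ?sA I C" "kspan \<phi> (C \<union> I) = UNIV" for I C
    proof -
      have "quot_dim ?sM (ideal_times scale I) = card (C \<times> B)"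
      proof (rule family_qd[OF msM _ spanning[OF hom ms C(1) C(3) I B(1) B(3)]])
        show "finite (C \<times> B)" using C(1) B(1) by simp
        fix u assume "(\<Sum>p\<in>C \<times> B. ?sM (u p) (?f p)) \<in> module.span ?sM (ideal_times scale I)"
        hence "(\<Sum>b\<in>B. scale (\<Sum>c\<in>C. \<phi> (u (c, b)) * c) b) \<in> ideal_times scale I"
          using IM_sM_span[OF hom ms] sum_swap[OF hom ms C(1) B(1)] by simp
        hence co: "\<forall>b\<in>B. (\<Sum>c\<in>C. \<phi> (u (c, b)) * c) \<in> I" by (rule coord[OF hom ms B I])
        show "\<forall>p\<in>C \<times> B. u p = 0"
        proof
          fix p assume p: "p \<in> C \<times> B"
          then obtain c b where cb: "p = (c, b)" "c \<in> C" "b \<in> B" by blast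
          have "(\<Sum>c\<in>C. ?sA (u (c, b)) c) \<in> kspan \<phi> I" using co cb(3) kI[OF I] by simp
          hence "(\<lambda>c. u (c, b)) c = 0" by (rule indep_modD[OF C(2) C(1) subset_refl, of "\<lambda>c. u (c, b)"]) (use cb(2) in auto)
          thus "u p = 0" using cb(1) by simp
        qed
      qed
      thus ?thesis unfolding tensor_quot_dim_def using card_cartesian_product by simp
    qed
    have tm: "tensor_quot_dim \<phi> scale m = card B"
      using tq[OF im _ indep_one_m[OF hom mm] span_one_m[OF hom resid]] by simp
    show "\<forall>n. \<forall>I. 0 < n \<and> colength \<phi> I n \<longrightarrow>
       real (tensor_quot_dim \<phi> scale I) / real n = real (tensor_quot_dim \<phi> scale m)"
    proof (intro allI impI)
      fix n I assume nI: "0 < n \<and> colength \<phi> I n"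
      then obtain C where C: "finite C" "indep_mod ?sA I C" "kspan \<phi> (C \<union> I) = UNIV" "card C = n"
        using getC by blast
      have I: "is_ideal I" using nI unfolding colength_def by blast
      have "tensor_quot_dim \<phi> scale I = n * card B" using tq[OF I C(1-3)] C(4) by simp
      thus "real (tensor_quot_dim \<phi> scale I) / real n = real (tensor_quot_dim \<phi> scale m)"
        using tm nI by simp
    qed
  next
    assume hyp: "\<forall>n. \<forall>I. 0 < n \<and> colength \<phi> I n \<longrightarrow>
       real (tensor_quot_dim \<phi> scale I) / real n = real (tensor_quot_dim \<phi> scale m)"
    obtain B0 where B0: "indep_mod ?sM (ideal_times scale m) B0"
      "module.span ?sM (B0 \<union> ideal_times scale m) = UNIV"
      "quot_dim ?sM (ideal_times scale m) = card B0"
      using qd_spec[OF msM] by blast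
    have tm: "tensor_quot_dim \<phi> scale m = card B0" unfolding tensor_quot_dim_def using B0(3) .
    have spS: "module.span ?sM (?f ` ({1} \<times> S) \<union> ideal_times scale m) = UNIV"
      by (rule spanning[OF hom ms _ span_one_m[OF hom resid] im S(1) S(2)]) simp
    have fB0: "finite B0"
      using indep_le_qd[OF msM _ spS B0(1)] S(1) by blast
    have "module.span scale (B0 \<union> ideal_times scale m) = UNIV"
      using span_sM_le[OF hom ms, of "B0 \<union> ideal_times scale m"] B0(2) by blast
    hence spB0: "module.span scale B0 = UNIV" by (rule nakayama[OF loc mm ms S(1) S(2)])
    have claim: "\<forall>b\<in>B0. a b \<in> I"
      if rel: "(\<Sum>b\<in>B0. scale (a b) b) = 0" and nI: "0 < n" "colength \<phi> I n" for a I n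
    proof -
      obtain C where C: "finite C" "indep_mod ?sA I C" "kspan \<phi> (C \<union> I) = UNIV" "card C = n"
        using getC[OF nI] by blast
      have I: "is_ideal I" using nI unfolding colength_def by blast
      have "real (tensor_quot_dim \<phi> scale I) / real n = real (card B0)" using hyp nI tm by simp
      hence "real (tensor_quot_dim \<phi> scale I) = real (card B0) * real n" using nI(1) by (simp add: field_simps)
      hence "tensor_quot_dim \<phi> scale I = card B0 * n" by (metis of_nat_eq_iff of_nat_mult)
      hence qd: "quot_dim ?sM (ideal_times scale I) = card (C \<times> B0)"
        unfolding tensor_quot_dim_def using C(4) by (simp add: card_cartesian_product mult.commute)
      have "\<forall>b. \<exists>u. a b - (\<Sum>c\<in>C. \<phi> (u c) * c) \<in> I" using decomp[OF hom ms C(1) C(3) I] by blast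
      hence "\<exists>U. \<forall>b. a b - (\<Sum>c\<in>C. \<phi> (U b c) * c) \<in> I" by (rule choice)
      then obtain U where U: "\<forall>b. a b - (\<Sum>c\<in>C. \<phi> (U b c) * c) \<in> I" by blast
      let ?v = "\<lambda>p. U (snd p) (fst p)"
      have e1: "(\<Sum>p\<in>C \<times> B0. ?sM (?v p) (?f p)) = (\<Sum>b\<in>B0. scale (\<Sum>c\<in>C. \<phi> (U b c) * c) b)"
        using sum_swap[OF hom ms C(1) fB0, of ?v] by simp
      have e2: "(\<Sum>b\<in>B0. scale (\<Sum>c\<in>C. \<phi> (U b c) * c) b) =
          (\<Sum>b\<in>B0. scale (a b) b) - (\<Sum>b\<in>B0. scale (a b - (\<Sum>c\<in>C. \<phi> (U b c) * c)) b)"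
      proof -
        have "\<And>b. scale (\<Sum>c\<in>C. \<phi> (U b c) * c) b = scale (a b) b - scale (a b - (\<Sum>c\<in>C. \<phi> (U b c) * c)) b"
          by (simp add: module.scale_left_diff_distrib[OF ms, symmetric])
        thus ?thesis by (simp add: sum_subtractf)
      qed
      have inI: "(\<Sum>b\<in>B0. scale (a b - (\<Sum>c\<in>C. \<phi> (U b c) * c)) b) \<in> ideal_times scale I"
        by (rule IM_sum[OF hom ms]) (use U in blast)
      have "(\<Sum>p\<in>C \<times> B0. ?sM (?v p) (?f p)) \<in> ideal_times scale I"
        unfolding e1 e2 rel using module.subspace_neg[OF ms IM_sub[OF hom ms] inI] by simp
      hence inspan: "(\<Sum>p\<in>C \<times> B0. ?sM (?v p) (?f p)) \<in> module.span ?sM (ideal_times scale I)"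
        using IM_sM_span[OF hom ms] by simp
      have spC: "module.span ?sM (?f ` (C \<times> B0) \<union> ideal_times scale I) = UNIV"
        by (rule spanning[OF hom ms C(1) C(3) I fB0 spB0])
      have qd2: "quot_dim ?sM (ideal_times scale I) = card (C \<times> B0)"
        using qd by simp
      show ?thesis
      proof
        fix b assume b: "b \<in> B0"
        have "\<forall>c\<in>C. U b c = 0"
        proof
          fix c assume c: "c \<in> C"
          have "?v (c, b) = 0"
            by (rule family_indep[OF msM _ spC qd2 inspan]) (use C(1) fB0 c b in auto)
          thus "U b c = 0" by simp
        qed
        hence "(\<Sum>c\<in>C. \<phi> (U b c) * c) = 0" by (simp add: hom_0[OF hom])
        thus "a b \<in> I" using U by (metis diff_zero)
      qed
    qed
    have indB0: "\<not> module.dependent scale B0"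
    proof
      assume "module.dependent scale B0"
      then obtain t u v where tu: "finite t" "t \<subseteq> B0" "(\<Sum>v\<in>t. scale (u v) v) = 0" "v \<in> t" "u v \<noteq> 0"
        unfolding module.dependent_explicit[OF ms] by blast
      let ?a = "\<lambda>b. if b \<in> t then u b else 0"
      have "(\<Sum>b\<in>B0. scale (?a b) b) = (\<Sum>b\<in>t. scale (?a b) b)"
        using fB0 tu(2) by (intro sum.mono_neutral_right) (auto simp: module.scale_zero_left[OF ms])
      also have "\<dots> = 0" using tu(3) by simp
      finally have rel: "(\<Sum>b\<in>B0. scale (?a b) b) = 0" .
      have "?a v = 0"
      proof (rule ccontr)
        assume "?a v \<noteq> 0"
        then obtain I n where "0 < n" "colength \<phi> I n" "?a v \<notin> I"
          using avoid[OF hom loc noeth mm resid] by blast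
        thus False using claim[OF rel] tu(2,4) by blast
      qed
      thus False using tu(4,5) by simp
    qed
    show "free_module scale" unfolding free_module_def using indB0 spB0 by blast
  qed
qed


end
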